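(* Let $q\in\mathbb{C}$, $|q|<1$, $\mathbf{s}=(s_1,\dots,s_d)\in\mathbb{N}^d$ and $\mathbf{a}=(a_1,\dots,a_d)\in\mathbb{Z}_{\ge0}^d$, and put $w=s_1+\dots+s_d$. Let $$F(t)=\mathbf{R}^{a_1}\Big[\mathbf{P}^{s_1-a_1}\big[\mathbf{y}\,\mathbf{R}^{a_2}[\mathbf{P}^{s_2-a_2}[\mathbf{y}\cdots\mathbf{R}^{a_d}[\mathbf{P}^{s_d-a_d}[\mathbf{y}]]\cdots]]\big]\Big](t).$$ If $a_1+\dots+a_j>0$ for all $j=1,\dots,d$, then $\zeta_q^{\mathbf{a}}[\mathbf{s}]=(1-q)^wF(1)$ and $\mathfrak{z}_q^{\mathbf{a}}[\mathbf{s}]=F(1)$.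
   Context: $\mathfrak{z}_q^{\mathbf{t}}[\mathbf{s}]=\sum_{k_1>\dots>k_d>0}\prod_{j}\frac{q^{k_jt_j}}{(1-q^{k_j})^{s_j}}$ and $\zeta_q^{\mathbf{t}}[\mathbf{s}]=(1-q)^{|\mathbf{s}|}\mathfrak{z}_q^{\mathbf{t}}[\mathbf{s}]$. Operators on power series $f(t)$ without constant term in $t$: $\mathbf{P}[f](t)=\sum_{k\ge0}f(q^kt)$, $\mathbf{R}[f](t)=\sum_{k\ge1}f(q^kt)$, $\mathbf{D}[f](t)=f(t)-f(qt)$; $\mathbf{P}^m$ is the $m$-fold composition of $\mathbf{P}$ for $m\ge0$ and $\mathbf{P}^m:=\mathbf{D}^{-m}$ for $m<0$; $\mathbf{y}$ denotes multiplication by $\mathbf{y}(t)=\frac{t}{1-t}$ (and the innermost $\mathbf{y}$ is the function $\mathbf{y}(t)$ itself). $F(1)$ is the value at $t=1$. *)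

theory Defs
  imports "HOL-Analysis.Analysis"
begin

definition zfrak :: "complex \<Rightarrow> nat list \<Rightarrow> nat list \<Rightarrow> complex" where
  "zfrak q tt ss = infsum
     (\<lambda>ks. \<Prod>j<length ss. q ^ (ks ! j * tt ! j) / (1 - q ^ (ks ! j)) ^ (ss ! j))
     {ks. length ks = length ss \<and> sorted_wrt (>) ks \<and> (\<forall>k\<in>set ks. k > 0)}"

definition zetaq :: "complex \<Rightarrow> nat list \<Rightarrow> nat list \<Rightarrow> complex" where
  "zetaq q tt ss = (1 - q) ^ sum_list ss * zfrak q tt ss"

text \<open>Operators, acting on functions (analytic in the unit disc, vanishing at 0).\<close>
definition Pop :: "complex \<Rightarrow> (complex \<Rightarrow> complex) \<Rightarrow> complex \<Rightarrow> complex" where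
  "Pop q f t = (\<Sum>k. f (q ^ k * t))"

definition Rop :: "complex \<Rightarrow> (complex \<Rightarrow> complex) \<Rightarrow> complex \<Rightarrow> complex" where
  "Rop q f t = (\<Sum>k. f (q ^ Suc k * t))"

definition Dop :: "complex \<Rightarrow> (complex \<Rightarrow> complex) \<Rightarrow> complex \<Rightarrow> complex" where
  "Dop q f t = f t - f (q * t)"

definition Ppow :: "complex \<Rightarrow> int \<Rightarrow> (complex \<Rightarrow> complex) \<Rightarrow> complex \<Rightarrow> complex" where
  "Ppow q m f = (if m \<ge> 0 then (Pop q ^^ nat m) f else (Dop q ^^ nat (- m)) f)"

definition yfun :: "complex \<Rightarrow> complex" where
  "yfun t = t / (1 - t)"

text \<open>Fop q [(s_1,a_1),...,(s_d,a_d)] =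
  R^{a_1}[P^{s_1-a_1}[y R^{a_2}[... R^{a_d}[P^{s_d-a_d}[y]]...]]]; the innermost y is y times 1.\<close>
fun Fop :: "complex \<Rightarrow> (nat \<times> nat) list \<Rightarrow> complex \<Rightarrow> complex" where
  "Fop q [] = (\<lambda>t. 1)"
| "Fop q ((s, a) # r) =
     (Rop q ^^ a) (Ppow q (int s - int a) (\<lambda>t. yfun t * Fop q r t))"

end

theory Submission
  imports Defs
begin

definition good :: "(nat \<Rightarrow> complex) \<Rightarrow> bool" where
  "good c \<longleftrightarrow> (\<forall>r::real. 0 \<le> r \<and> r < 1 \<longrightarrow> summable (\<lambda>n. norm (c n) * r ^ n))"

definition rep :: "(nat \<Rightarrow> complex) \<Rightarrow> (complex \<Rightarrow> complex) \<Rightarrow> bool" where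
  "rep c f \<longleftrightarrow> good c \<and> (\<forall>t. norm t < 1 \<longrightarrow> f t = (\<Sum>n. c n * t ^ n))"

lemma good_summable: "good c \<Longrightarrow> norm t < 1 \<Longrightarrow> summable (\<lambda>n. norm (c n * t ^ n))"
  unfolding good_def by (simp add: norm_mult norm_power)

lemma good_mono:
  assumes "good c" "\<And>n. norm (d n) \<le> K * norm (c n)"
  shows "good d"
  unfolding good_def
proof (intro allI impI)
  fix r :: real assume r: "0 \<le> r \<and> r < 1"
  have "summable (\<lambda>n. K * (norm (c n) * r ^ n))"
    using assms(1) r unfolding good_def by (intro summable_mult) auto
  then show "summable (\<lambda>n. norm (d n) * r ^ n)"
  proof (rule summable_comparison_test')
    fix n
    have "norm (d n) * r ^ n \<le> K * norm (c n) * r ^ n"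
      using assms(2)[of n] r by (intro mult_right_mono) auto
    then show "norm (norm (d n) * r ^ n) \<le> K * (norm (c n) * r ^ n)"
      using r by (simp add: mult.assoc)
  qed
qed

lemma rep_cong: "rep c f \<Longrightarrow> g = f \<Longrightarrow> (\<And>n. c n = d n) \<Longrightarrow> rep d g"
  by (metis ext)

lemma norm_one_minus_pow:
  fixes q :: complex
  assumes "norm q < 1" "n > 0"
  shows "1 - norm q \<le> norm (1 - q ^ n)"
proof -
  have "norm q ^ n \<le> norm q ^ 1"
    using assms by (intro power_decreasing) auto
  moreover have "norm (1::complex) - norm (q ^ n) \<le> norm (1 - q ^ n)"
    by (rule norm_triangle_ineq2)
  ultimately show ?thesis by (simp add: norm_power)
qed

lemma one_minus_pow_nz:
  fixes q :: complex
  assumes "norm q < 1" "n > 0"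
  shows "1 - q ^ n \<noteq> 0"
  using norm_one_minus_pow[OF assms] assms(1) by auto

lemma term_le_suminf:
  fixes f :: "nat \<Rightarrow> real"
  shows "summable f \<Longrightarrow> (\<And>n. 0 \<le> f n) \<Longrightarrow> f i \<le> suminf f"
  using sum_le_suminf[of f "{i}"] by auto

lemma suminf_exchange:
  fixes g :: "nat \<Rightarrow> nat \<Rightarrow> complex"
  assumes row: "\<And>k. summable (\<lambda>n. norm (g k n))"
    and tot: "summable (\<lambda>k. \<Sum>n. norm (g k n))"
  shows "(\<Sum>k. \<Sum>n. g k n) = (\<Sum>n. \<Sum>k. g k n)"
proof -
  have conv: "infsum f UNIV = suminf f" if "f summable_on (UNIV :: nat set)" for f :: "nat \<Rightarrow> 'b::banach"
    using has_sum_imp_sums[OF has_sum_infsum[OF that]] by (simp add: sums_unique)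
  have rowS: "(\<lambda>n. norm (g k n)) summable_on UNIV" for k
    using row[of k] by (intro norm_summable_imp_summable_on) simp
  have rowS': "(\<lambda>n. g k n) summable_on UNIV" for k
    using row[of k] by (intro norm_summable_imp_summable_on) simp
  have col: "summable (\<lambda>k. norm (g k n))" for n
  proof (rule summable_comparison_test'[OF tot])
    fix k
    show "norm (norm (g k n)) \<le> (\<Sum>n. norm (g k n))"
      using term_le_suminf[of "\<lambda>n. norm (g k n)" n] row[of k] by simp
  qed
  have colS: "(\<lambda>k. g k n) summable_on UNIV" for n
    using col[of n] by (intro norm_summable_imp_summable_on) simp
  have "(\<lambda>x. norm ((\<lambda>(k, n). g k n) x)) summable_on (Sigma UNIV (\<lambda>_. UNIV))"
  proof (rule Infinite_Sum.abs_summable_on_Sigma_iff[where f="\<lambda>(k,n). g k n" and A=UNIV and B="\<lambda>_. UNIV", THEN iffD2], intro conjI ballI)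
    show "(\<lambda>x. norm ((\<lambda>n. (\<lambda>(k, n). g k n) (k, n)) x)) summable_on UNIV" for k
      using rowS[of k] by simp
    have "(\<lambda>k. infsum (\<lambda>n. norm (g k n)) UNIV) = (\<lambda>k. \<Sum>n. norm (g k n))"
      using rowS by (simp add: conv)
    then show "(\<lambda>x. norm ((\<lambda>k. infsum (\<lambda>n. norm ((\<lambda>(k, n). g k n) (k, n))) UNIV) x)) summable_on UNIV"
    proof -
      have "summable (\<lambda>k. norm (norm (\<Sum>n. norm (g k n))))"
        using tot by (simp add: suminf_nonneg row)
      then show ?thesis
        using rowS by (simp add: conv norm_summable_imp_summable_on)
    qed
  qed
  then have S: "(\<lambda>(k, n). g k n) summable_on (UNIV \<times> UNIV)"
    using abs_summable_summable by auto
  have 1: "(\<lambda>k. infsum (\<lambda>n. g k n) UNIV) summable_on UNIV"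
    using summable_on_Sigma_banach[of "\<lambda>k n. g k n" UNIV "\<lambda>_. UNIV"] S by auto
  have S2: "(\<lambda>(n, k). g k n) summable_on (UNIV \<times> UNIV)"
    using S summable_on_swap[of "\<lambda>(k,n). g k n" UNIV UNIV] by (simp add: case_prod_unfold)
  have 2: "(\<lambda>n. infsum (\<lambda>k. g k n) UNIV) summable_on UNIV"
    using summable_on_Sigma_banach[of "\<lambda>n k. g k n" UNIV "\<lambda>_. UNIV"] S2 by auto
  have "infsum (\<lambda>k. infsum (\<lambda>n. g k n) UNIV) UNIV = infsum (\<lambda>n. infsum (\<lambda>k. g k n) UNIV) UNIV"
    using infsum_swap_banach[OF S] .
  then show ?thesis
    using 1 2 rowS' colS by (simp add: conv)
qed

lemma op_gen:
  fixes q t :: complex and e :: nat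
  assumes q: "norm q < 1" and rp: "rep c f" and c0: "c 0 = 0"
    and t1: "norm t \<le> 1" and te: "norm (q ^ e * t) < 1"
  shows "(\<lambda>n. c n * (q ^ n) ^ e / (1 - q ^ n) * t ^ n) sums (\<Sum>k. f (q ^ (k + e) * t))"
    and "summable (\<lambda>n. norm (c n * (q ^ n) ^ e / (1 - q ^ n) * t ^ n))"
proof -
  define \<rho> where "\<rho> = norm (q ^ e * t)"
  have \<rho>: "0 \<le> \<rho>" "\<rho> < 1" using te by (auto simp: \<rho>_def)
  have gd: "good c" using rp by (simp add: rep_def)
  have Bs: "summable (\<lambda>n. norm (c n) * \<rho> ^ n)" using gd \<rho> by (simp add: good_def)
  define B where "B = (\<Sum>n. norm (c n) * \<rho> ^ n)"
  define g where "g k n = c n * (q ^ (k + e) * t) ^ n" for k n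
  have nq: "0 \<le> norm q" "norm q < 1" using q by auto
  have fk: "f (q ^ (k + e) * t) = (\<Sum>n. g k n)" for k
  proof -
    have "norm (q ^ (k + e) * t) = norm q ^ k * norm (q ^ e * t)"
      by (simp add: power_add norm_mult norm_power)
    also have "\<dots> \<le> 1 * norm (q ^ e * t)"
      using nq by (intro mult_right_mono power_le_one) auto
    finally have "norm (q ^ (k + e) * t) < 1" using te by simp
    then show ?thesis using rp by (simp add: rep_def g_def)
  qed
  have gb: "norm (g k n) \<le> norm q ^ k * (norm (c n) * \<rho> ^ n)" for k n
  proof (cases "n = 0")
    case True then show ?thesis by (simp add: g_def c0)
  next
    case False
    have "norm (g k n) = norm (c n) * (norm q ^ k) ^ n * \<rho> ^ n"
      by (simp add: g_def \<rho>_def norm_mult norm_power power_add power_mult_distrib)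
    also have "(norm q ^ k) ^ n \<le> (norm q ^ k) ^ 1"
      using False nq by (intro power_decreasing) (auto intro: power_le_one)
    finally show ?thesis
      using \<rho> by (simp add: mult_left_mono mult_right_mono algebra_simps)
  qed
  have row: "summable (\<lambda>n. norm (g k n))" for k
    by (rule summable_comparison_test'[OF summable_mult[OF Bs, of "norm q ^ k"]]) (use gb in auto)
  have rowb: "(\<Sum>n. norm (g k n)) \<le> norm q ^ k * B" for k
  proof -
    have "(\<Sum>n. norm (g k n)) \<le> (\<Sum>n. norm q ^ k * (norm (c n) * \<rho> ^ n))"
      by (intro suminf_le gb row summable_mult Bs)
    also have "\<dots> = norm q ^ k * B" unfolding B_def by (rule suminf_mult[OF Bs])
    finally show ?thesis .
  qed
  have tot: "summable (\<lambda>k. \<Sum>n. norm (g k n))"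
  proof (rule summable_comparison_test')
    show "summable (\<lambda>k. norm q ^ k * B)"
      using nq by (intro summable_mult2 summable_geometric) simp
    fix k show "norm (\<Sum>n. norm (g k n)) \<le> norm q ^ k * B"
      using rowb[of k] row[of k] by (simp add: suminf_nonneg)
  qed
  have col: "(\<Sum>k. g k n) = c n * (q ^ n) ^ e / (1 - q ^ n) * t ^ n" for n
  proof (cases "n = 0")
    case True then show ?thesis by (simp add: g_def c0)
  next
    case False
    have qn: "norm (q ^ n) < 1"
      using False q by (simp add: norm_power power_less_one_iff)
    have "(\<lambda>k. (c n * (q ^ n) ^ e * t ^ n) * (q ^ n) ^ k) sums ((c n * (q ^ n) ^ e * t ^ n) * (1 / (1 - q ^ n)))"
      by (intro sums_mult geometric_sums qn)
    moreover have "g k n = (c n * (q ^ n) ^ e * t ^ n) * (q ^ n) ^ k" for k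
      by (simp add: g_def power_add power_mult_distrib power_mult[symmetric] mult.commute mult.left_commute)
    ultimately show ?thesis by (simp add: sums_unique[symmetric])
  qed
  have "(\<Sum>k. f (q ^ (k + e) * t)) = (\<Sum>n. c n * (q ^ n) ^ e / (1 - q ^ n) * t ^ n)"
    using suminf_exchange[OF row tot] by (simp add: fk col)
  moreover have sm: "summable (\<lambda>n. norm (c n * (q ^ n) ^ e / (1 - q ^ n) * t ^ n))"
  proof (rule summable_comparison_test'[OF summable_mult[OF Bs, of "1 / (1 - norm q)"]])
    fix n
    show "norm (norm (c n * (q ^ n) ^ e / (1 - q ^ n) * t ^ n)) \<le> 1 / (1 - norm q) * (norm (c n) * \<rho> ^ n)"
    proof (cases "n = 0")
      case True then show ?thesis by (simp add: c0)
    next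
      case False
      have d: "1 - norm q \<le> norm (1 - q ^ n)" by (rule norm_one_minus_pow[OF q]) (use False in auto)
      have "norm (c n * (q ^ n) ^ e / (1 - q ^ n) * t ^ n) = norm (c n) * \<rho> ^ n / norm (1 - q ^ n)"
        by (simp add: \<rho>_def norm_mult norm_divide norm_power power_mult_distrib power_mult[symmetric] mult.commute)
      also have "\<dots> \<le> norm (c n) * \<rho> ^ n / (1 - norm q)"
        using d nq \<rho> by (intro divide_left_mono) (auto intro!: mult_pos_pos)
      finally show ?thesis by simp
    qed
  qed
  ultimately show "(\<lambda>n. c n * (q ^ n) ^ e / (1 - q ^ n) * t ^ n) sums (\<Sum>k. f (q ^ (k + e) * t))"
    using summable_norm_cancel[OF sm] by (simp add: summable_sums)
  show "summable (\<lambda>n. norm (c n * (q ^ n) ^ e / (1 - q ^ n) * t ^ n))" by (rule sm)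
qed

lemma coef_div_bound:
  fixes q :: complex
  assumes q: "norm q < 1" and c0: "c 0 = 0" and that: "norm x \<le> 1"
  shows "norm (c n * x / (1 - q ^ n)) \<le> (1 / (1 - norm q)) * norm (c n)"
proof (cases "n = 0")
  case True then show ?thesis by (simp add: c0)
next
  case False
  have d: "1 - norm q \<le> norm (1 - q ^ n)" by (rule norm_one_minus_pow[OF q]) (use False in auto)
  have "norm (c n * x / (1 - q ^ n)) = norm (c n) * norm x / norm (1 - q ^ n)"
    by (simp add: norm_mult norm_divide)
  also have "\<dots> \<le> norm (c n) * 1 / (1 - norm q)"
    using d q that by (intro frac_le mult_left_mono) auto
  finally show ?thesis by simp
qed

lemma rep_P:
  fixes q :: complex
  assumes q: "norm q < 1" and rp: "rep c f" and c0: "c 0 = 0"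
  shows "rep (\<lambda>n. c n / (1 - q ^ n)) (Pop q f)"
  unfolding rep_def
proof (intro conjI allI impI)
  show "good (\<lambda>n. c n / (1 - q ^ n))"
  proof (rule good_mono[of c _ "1 / (1 - norm q)"])
    show "good c" using rp by (simp add: rep_def)
    fix n show "norm (c n / (1 - q ^ n)) \<le> 1 / (1 - norm q) * norm (c n)"
      using coef_div_bound[where c=c and q=q and x=1 and n=n, OF q c0] by simp
  qed
  fix t :: complex assume t: "norm t < 1"
  have "(\<lambda>n. c n * (q ^ n) ^ 0 / (1 - q ^ n) * t ^ n) sums (\<Sum>k. f (q ^ (k + 0) * t))"
    by (rule op_gen(1)[OF q rp c0]) (use t in auto)
  then show "Pop q f t = (\<Sum>n. c n / (1 - q ^ n) * t ^ n)"
    by (simp add: Pop_def sums_unique)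
qed

lemma R_at:
  fixes q :: complex
  assumes q: "norm q < 1" and rp: "rep c f" and c0: "c 0 = 0" and t: "norm t \<le> 1"
  shows "(\<lambda>n. c n * q ^ n / (1 - q ^ n) * t ^ n) sums (Rop q f t)"
    and "summable (\<lambda>n. norm (c n * q ^ n / (1 - q ^ n) * t ^ n))"
proof -
  have te: "norm (q ^ 1 * t) < 1"
  proof -
    have "norm (q ^ 1 * t) = norm q * norm t" by (simp add: norm_mult)
    also have "\<dots> \<le> norm q * 1" using t by (intro mult_left_mono) auto
    finally show ?thesis using q by simp
  qed
  show "(\<lambda>n. c n * q ^ n / (1 - q ^ n) * t ^ n) sums (Rop q f t)"
    using op_gen(1)[OF q rp c0 t te] by (simp add: Rop_def)
  show "summable (\<lambda>n. norm (c n * q ^ n / (1 - q ^ n) * t ^ n))"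
    using op_gen(2)[OF q rp c0 t te] by simp
qed

lemma rep_R:
  fixes q :: complex
  assumes q: "norm q < 1" and rp: "rep c f" and c0: "c 0 = 0"
  shows "rep (\<lambda>n. c n * q ^ n / (1 - q ^ n)) (Rop q f)"
  unfolding rep_def
proof (intro conjI allI impI)
  show "good (\<lambda>n. c n * q ^ n / (1 - q ^ n))"
  proof (rule good_mono[of c _ "1 / (1 - norm q)"])
    show "good c" using rp by (simp add: rep_def)
    fix n show "norm (c n * q ^ n / (1 - q ^ n)) \<le> 1 / (1 - norm q) * norm (c n)"
      using coef_div_bound[where c=c and q=q and x="q ^ n" and n=n, OF q c0] q
      by (simp add: norm_power power_le_one)
  qed
  fix t :: complex assume t: "norm t < 1"
  show "Rop q f t = (\<Sum>n. c n * q ^ n / (1 - q ^ n) * t ^ n)"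
    using R_at(1)[OF q rp c0, of t] t by (simp add: sums_unique)
qed

lemma rep_D:
  fixes q :: complex
  assumes q: "norm q < 1" and rp: "rep c f"
  shows "rep (\<lambda>n. c n * (1 - q ^ n)) (Dop q f)"
  unfolding rep_def
proof (intro conjI allI impI)
  have "norm (c n * (1 - q ^ n)) \<le> 2 * norm (c n)" for n
  proof -
    have "norm (1 - q ^ n) \<le> norm (1::complex) + norm (q ^ n)" by (rule norm_triangle_ineq4)
    also have "\<dots> \<le> 2" using q by (simp add: norm_power power_le_one)
    finally have "norm (1 - q ^ n) \<le> 2" .
    then have "norm (c n) * norm (1 - q ^ n) \<le> norm (c n) * 2" by (rule mult_left_mono) simp
    then show ?thesis by (simp add: norm_mult mult.commute)
  qed
  then show "good (\<lambda>n. c n * (1 - q ^ n))"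
    using rp by (rule_tac good_mono[of c _ 2]) (auto simp: rep_def)
  fix t :: complex assume t: "norm t < 1"
  have qt: "norm (q * t) < 1"
  proof -
    have "norm (q * t) = norm q * norm t" by (simp add: norm_mult)
    also have "\<dots> \<le> 1 * norm t" using q by (intro mult_right_mono) auto
    finally show ?thesis using t by simp
  qed
  have gd: "good c" using rp by (simp add: rep_def)
  have s1: "summable (\<lambda>n. c n * t ^ n)" by (rule summable_norm_cancel[OF good_summable[OF gd t]])
  have s2: "summable (\<lambda>n. c n * (q * t) ^ n)" by (rule summable_norm_cancel[OF good_summable[OF gd qt]])
  have f1: "f t = (\<Sum>n. c n * t ^ n)" using rp t unfolding rep_def by blast
  have f2: "f (q * t) = (\<Sum>n. c n * (q * t) ^ n)" using rp qt unfolding rep_def by blast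
  have "Dop q f t = (\<Sum>n. c n * t ^ n) - (\<Sum>n. c n * (q * t) ^ n)"
    unfolding Dop_def f1 f2 ..
  also have "\<dots> = (\<Sum>n. c n * t ^ n - c n * (q * t) ^ n)"
    by (rule suminf_diff[OF s1 s2])
  also have "\<dots> = (\<Sum>n. c n * (1 - q ^ n) * t ^ n)"
  proof (rule arg_cong[where f=suminf], rule ext)
    fix n
    show "c n * t ^ n - c n * (q * t) ^ n = c n * (1 - q ^ n) * t ^ n"
      by (simp only: power_mult_distrib right_diff_distrib left_diff_distrib mult_1_right mult_1_left mult_ac)
  qed
  finally show "Dop q f t = (\<Sum>n. c n * (1 - q ^ n) * t ^ n)" .
qed

lemma conv_e:
  fixes a :: "nat \<Rightarrow> 'a::comm_ring_1"
  shows "(\<Sum>i\<le>k. (a i * x ^ i) * ((if k - i = 0 then 0 else 1) * x ^ (k - i))) = (\<Sum>i<k. a i) * x ^ k"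
proof -
  have "(\<Sum>i\<le>k. (a i * x ^ i) * ((if k - i = 0 then 0 else 1) * x ^ (k - i)))
      = (\<Sum>i<k. (a i * x ^ i) * ((if k - i = 0 then 0 else 1) * x ^ (k - i)))"
    by (simp add: lessThan_Suc_atMost[symmetric])
  also have "\<dots> = (\<Sum>i<k. a i * x ^ k)"
  proof (rule sum.cong)
    fix i assume "i \<in> {..<k}"
    then have "i \<le> k" "k - i \<noteq> 0" by auto
    then show "(a i * x ^ i) * ((if k - i = 0 then 0 else 1) * x ^ (k - i)) = a i * x ^ k"
      by (simp add: mult.assoc power_add[symmetric])
  qed simp
  finally show ?thesis by (simp add: sum_distrib_right)
qed

lemma rep_y:
  assumes rp: "rep c f"
  shows "rep (\<lambda>n. \<Sum>m<n. c m) (\<lambda>t. yfun t * f t)"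
  unfolding rep_def
proof (intro conjI allI impI)
  have gd: "good c" using rp by (simp add: rep_def)
  show "good (\<lambda>n. \<Sum>m<n. c m)"
    unfolding good_def
  proof (intro allI impI)
    fix r :: real assume r: "0 \<le> r \<and> r < 1"
    have sa: "summable (\<lambda>i. norm (norm (c i) * r ^ i))"
      using gd r by (simp add: good_def abs_mult)
    have sb: "summable (\<lambda>j. norm ((if j = 0 then 0 else 1) * r ^ j))"
      by (rule summable_comparison_test'[OF summable_geometric[of r]]) (use r in auto)
    have "summable (\<lambda>k. \<Sum>i\<le>k. (norm (c i) * r ^ i) * ((if k - i = 0 then 0 else 1) * r ^ (k - i)))"
      using Cauchy_product_sums[OF sa sb] by (simp add: sums_summable)
    then have s: "summable (\<lambda>k. (\<Sum>i<k. norm (c i)) * r ^ k)"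
      by (simp only: conv_e)
    show "summable (\<lambda>n. norm (\<Sum>m<n. c m) * r ^ n)"
    proof (rule summable_comparison_test'[OF s])
      fix n
      have "norm (\<Sum>m<n. c m) * r ^ n \<le> (\<Sum>i<n. norm (c i)) * r ^ n"
        using r by (intro mult_right_mono norm_sum) auto
      then show "norm (norm (\<Sum>m<n. c m) * r ^ n) \<le> (\<Sum>i<n. norm (c i)) * r ^ n"
        using r by simp
    qed
  qed
  fix t :: complex assume t: "norm t < 1"
  have sa: "summable (\<lambda>i. norm (c i * t ^ i))" by (rule good_summable[OF gd t])
  have sb: "summable (\<lambda>j. norm ((if j = 0 then 0 else 1) * t ^ j))"
    by (rule summable_comparison_test'[OF summable_geometric[of "norm t"]])
       (use t in \<open>auto simp: norm_power\<close>)
  have ysum: "(\<lambda>j. (if j = 0 then 0 else 1) * t ^ j) sums yfun t"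
  proof -
    have "(\<lambda>j. t * t ^ j) sums (t * (1 / (1 - t)))"
      by (intro sums_mult geometric_sums t)
    then have "(\<lambda>j. (\<lambda>j. (if j = 0 then 0 else 1) * t ^ j) (Suc j)) sums (yfun t)"
      by (simp add: yfun_def)
    then show ?thesis by (subst (asm) sums_Suc_iff) simp
  qed
  have "(\<lambda>k. \<Sum>i\<le>k. (c i * t ^ i) * ((if k - i = 0 then 0 else 1) * t ^ (k - i)))
        sums ((\<Sum>i. c i * t ^ i) * (\<Sum>j. (if j = 0 then 0 else 1) * t ^ j))"
    by (rule Cauchy_product_sums[OF sa sb])
  then have "(\<lambda>k. (\<Sum>i<k. c i) * t ^ k) sums (f t * yfun t)"
    using rp t ysum by (simp only: conv_e) (simp add: rep_def sums_unique[symmetric])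
  then show "yfun t * f t = (\<Sum>n. (\<Sum>m<n. c m) * t ^ n)"
    by (simp add: sums_unique mult.commute)
qed

lemma rep_Pn:
  fixes q :: complex
  assumes q: "norm q < 1" and rp: "rep c f" and c0: "c 0 = 0"
  shows "rep (\<lambda>n. c n / (1 - q ^ n) ^ m) ((Pop q ^^ m) f)"
proof (induction m)
  case 0 then show ?case using rp by simp
next
  case (Suc m)
  have "rep (\<lambda>n. c n / (1 - q ^ n) ^ m / (1 - q ^ n)) (Pop q ((Pop q ^^ m) f))"
    by (rule rep_P[OF q Suc]) (simp add: c0)
  moreover have "(Pop q ^^ Suc m) f = Pop q ((Pop q ^^ m) f)" by simp
  ultimately show ?case by (rule_tac rep_cong) (auto simp: power_Suc2 mult_ac)
qed

lemma rep_Rn: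
  fixes q :: complex
  assumes q: "norm q < 1" and rp: "rep c f" and c0: "c 0 = 0"
  shows "rep (\<lambda>n. c n * (q ^ n / (1 - q ^ n)) ^ m) ((Rop q ^^ m) f)"
proof (induction m)
  case 0 then show ?case using rp by simp
next
  case (Suc m)
  have "rep (\<lambda>n. c n * (q ^ n / (1 - q ^ n)) ^ m * q ^ n / (1 - q ^ n)) (Rop q ((Rop q ^^ m) f))"
    by (rule rep_R[OF q Suc]) (simp add: c0)
  moreover have "(Rop q ^^ Suc m) f = Rop q ((Rop q ^^ m) f)" by simp
  ultimately show ?case by (rule_tac rep_cong) (auto simp: power_Suc2 mult_ac)
qed

lemma rep_Dn:
  fixes q :: complex
  assumes q: "norm q < 1" and rp: "rep c f"
  shows "rep (\<lambda>n. c n * (1 - q ^ n) ^ m) ((Dop q ^^ m) f)"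
proof (induction m)
  case 0 then show ?case using rp by simp
next
  case (Suc m)
  have "rep (\<lambda>n. c n * (1 - q ^ n) ^ m * (1 - q ^ n)) (Dop q ((Dop q ^^ m) f))"
    by (rule rep_D[OF q Suc])
  moreover have "(Dop q ^^ Suc m) f = Dop q ((Dop q ^^ m) f)" by simp
  ultimately show ?case by (rule_tac rep_cong) (auto simp: power_Suc2 mult_ac)
qed

definition pcoef :: "complex \<Rightarrow> int \<Rightarrow> (nat \<Rightarrow> complex) \<Rightarrow> nat \<Rightarrow> complex" where
  "pcoef q m Y n = (if 0 \<le> m then Y n / (1 - q ^ n) ^ nat m else Y n * (1 - q ^ n) ^ nat (- m))"

lemma rep_Ppow:
  fixes q :: complex
  assumes q: "norm q < 1" and rp: "rep Y G" and Y0: "Y 0 = 0"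
  shows "rep (pcoef q m Y) (Ppow q m G)" "pcoef q m Y 0 = 0"
proof -
  show "rep (pcoef q m Y) (Ppow q m G)"
  proof (cases "0 \<le> m")
    case True
    then show ?thesis using rep_Pn[OF q rp Y0, of "nat m"]
      by (simp add: Ppow_def pcoef_def[abs_def])
  next
    case False
    then show ?thesis using rep_Dn[OF q rp, of "nat (- m)"]
      by (simp add: Ppow_def pcoef_def[abs_def])
  qed
  show "pcoef q m Y 0 = 0" by (simp add: pcoef_def Y0)
qed

fun cF :: "complex \<Rightarrow> (nat \<times> nat) list \<Rightarrow> nat \<Rightarrow> complex" where
  "cF q [] n = (if n = 0 then 1 else 0)"
| "cF q ((s, a) # r) n = q ^ (n * a) / (1 - q ^ n) ^ s * (\<Sum>m<n. cF q r m)"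

lemma cF_coef:
  fixes q :: complex
  assumes q: "norm q < 1"
  shows "cF q ((s, a) # r) n = pcoef q (int s - int a) (\<lambda>n. \<Sum>m<n. cF q r m) n * (q ^ n / (1 - q ^ n)) ^ a"
proof (cases "n = 0")
  case True then show ?thesis by (simp add: pcoef_def)
next
  case False
  define z where "z = 1 - q ^ n"
  have z: "z \<noteq> 0" unfolding z_def by (rule one_minus_pow_nz[OF q]) (use False in auto)
  define Y where "Y = (\<Sum>m<n. cF q r m)"
  show ?thesis
  proof (cases "a \<le> s")
    case True
    then have zs: "z ^ s = z ^ (s - a) * z ^ a" by (simp add: power_add[symmetric])
    show ?thesis using True z
      by (simp add: pcoef_def z_def[symmetric] Y_def[symmetric] zs power_divide power_mult[symmetric] mult.commute nat_diff_distrib)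
  next
    case False
    then have za: "z ^ a = z ^ (a - s) * z ^ s" by (simp add: power_add[symmetric])
    have "nat (- (int s - int a)) = a - s" using False by simp
    then show ?thesis using False z
      by (simp add: pcoef_def z_def[symmetric] Y_def[symmetric] za power_divide power_mult[symmetric] mult.commute)
  qed
qed

lemma rep_Fop:
  fixes q :: complex
  assumes q: "norm q < 1"
  shows "rep (cF q r) (Fop q r)"
proof (induction r)
  case Nil
  have g: "good (cF q [])"
    unfolding good_def
  proof (intro allI impI)
    fix r :: real
    show "summable (\<lambda>n. norm (cF q [] n) * r ^ n)"
      by (rule summable_finite[of "{0}"]) auto
  qed
  have "(\<lambda>n. cF q [] n * t ^ n) sums 1" for t :: complex
  proof -
    have "(\<lambda>n. cF q [] n * t ^ n) = (\<lambda>r. if r = 0 then 1 else 0)" by (auto simp: fun_eq_iff)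
    then show ?thesis using sums_single[of 0 "\<lambda>_. 1::complex"] by simp
  qed
  note sm = this
  show ?case unfolding rep_def
  proof (intro conjI allI impI)
    show "good (cF q [])" by (rule g)
    fix t :: complex
    show "Fop q [] t = (\<Sum>n. cF q [] n * t ^ n)" using sums_unique[OF sm[of t]] by simp
  qed
next
  case (Cons p r)
  obtain s a where p: "p = (s, a)" by force
  have ry: "rep (\<lambda>n. \<Sum>m<n. cF q r m) (\<lambda>t. yfun t * Fop q r t)" by (rule rep_y[OF Cons])
  have Y0: "(\<lambda>n. \<Sum>m<n. cF q r m) 0 = 0" by simp
  note pp = rep_Ppow[OF q ry Y0, of "int s - int a"]
  have "rep (\<lambda>n. pcoef q (int s - int a) (\<lambda>n. \<Sum>m<n. cF q r m) n * (q ^ n / (1 - q ^ n)) ^ a)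
          ((Rop q ^^ a) (Ppow q (int s - int a) (\<lambda>t. yfun t * Fop q r t)))"
    by (rule rep_Rn[OF q pp])
  then show ?case
    by (rule rep_cong) (auto simp: p cF_coef[OF q] simp del: cF.simps)
qed

lemma Fop_at1:
  fixes q :: complex
  assumes q: "norm q < 1" and a: "a > 0"
  shows "(cF q ((s, a) # r)) sums (Fop q ((s, a) # r) 1)"
    "summable (\<lambda>n. norm (cF q ((s, a) # r) n))"
proof -
  have ry: "rep (\<lambda>n. \<Sum>m<n. cF q r m) (\<lambda>t. yfun t * Fop q r t)" by (rule rep_y[OF rep_Fop[OF q]])
  have Y0: "(\<lambda>n. \<Sum>m<n. cF q r m) 0 = 0" by simp
  note pp = rep_Ppow[OF q ry Y0, of "int s - int a"]
  define G where "G = Ppow q (int s - int a) (\<lambda>t. yfun t * Fop q r t)"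
  define pc where "pc = pcoef q (int s - int a) (\<lambda>n. \<Sum>m<n. cF q r m)"
  have h: "rep (\<lambda>n. pc n * (q ^ n / (1 - q ^ n)) ^ (a - 1)) ((Rop q ^^ (a - 1)) G)"
    unfolding G_def pc_def by (rule rep_Rn[OF q pp])
  have h0: "pc 0 * (q ^ 0 / (1 - q ^ 0)) ^ (a - 1) = 0" using pp(2) by (simp add: pc_def)
  have F: "Fop q ((s, a) # r) = Rop q ((Rop q ^^ (a - 1)) G)"
  proof -
    obtain b where "a = Suc b" using a by (cases a) auto
    then show ?thesis by (simp add: G_def)
  qed
  have ceq: "pc n * (q ^ n / (1 - q ^ n)) ^ (a - 1) * q ^ n / (1 - q ^ n) * 1 ^ n = cF q ((s, a) # r) n" for n
  proof -
    have "a = Suc (a - 1)" using a by simp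
    then have "(q ^ n / (1 - q ^ n)) ^ a = (q ^ n / (1 - q ^ n)) ^ (a - 1) * (q ^ n / (1 - q ^ n))"
      by (metis power_Suc2)
    then show ?thesis
      by (simp only: cF_coef[OF q] pc_def power_one mult_1_right) (simp add: mult.assoc times_divide_eq_right)
  qed
  have e: "(\<lambda>n. pc n * (q ^ n / (1 - q ^ n)) ^ (a - 1) * q ^ n / (1 - q ^ n) * 1 ^ n) = cF q ((s, a) # r)"
    by (rule ext, rule ceq)
  show "(cF q ((s, a) # r)) sums (Fop q ((s, a) # r) 1)"
    using R_at(1)[OF q h h0, of 1] unfolding e F[symmetric] by simp
  show "summable (\<lambda>n. norm (cF q ((s, a) # r) n))"
  proof -
    have n1: "norm (1::complex) \<le> 1" by simp
    show ?thesis using R_at(2)[OF q h h0 n1] by (simp only: ceq)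
  qed
qed

definition LL :: "nat \<Rightarrow> nat \<Rightarrow> nat list set" where
  "LL d N = {ks. length ks = d \<and> sorted_wrt (>) ks \<and> (\<forall>k\<in>set ks. 0 < k \<and> k < N)}"

fun CC :: "(nat \<Rightarrow> complex) list \<Rightarrow> nat \<Rightarrow> complex" where
  "CC [] n = (if n = 0 then 1 else 0)"
| "CC (w # ws) n = w n * (\<Sum>m<n. CC ws m)"

definition WW :: "(nat \<Rightarrow> complex) list \<Rightarrow> nat list \<Rightarrow> complex" where
  "WW ws ks = (\<Prod>j<length ws. (ws ! j) (ks ! j))"

lemma finite_LL: "finite (LL d N)"
proof (rule finite_subset)
  show "LL d N \<subseteq> {ks. set ks \<subseteq> {..<N} \<and> length ks = d}" by (auto simp: LL_def)
  show "finite {ks. set ks \<subseteq> {..<N} \<and> length ks = d}" by (rule finite_lists_length_eq) simp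
qed

lemma WW_Cons: "WW (w # ws) (m # ks) = w m * WW ws ks"
  unfolding WW_def by (simp only: length_Cons prod.lessThan_Suc_shift) simp

lemma LL_Cons_bij:
  "bij_betw (\<lambda>(m, ks). m # ks) (Sigma {1..<N} (\<lambda>m. LL d m)) (LL (Suc d) N)"
proof (rule bij_betw_imageI)
  show "inj_on (\<lambda>(m, ks). m # ks) (Sigma {1..<N} (\<lambda>m. LL d m))"
    by (auto simp: inj_on_def)
  show "(\<lambda>(m, ks). m # ks) ` Sigma {1..<N} (\<lambda>m. LL d m) = LL (Suc d) N"
  proof
    show "(\<lambda>(m, ks). m # ks) ` Sigma {1..<N} (\<lambda>m. LL d m) \<subseteq> LL (Suc d) N"
      by (force simp: LL_def)
    show "LL (Suc d) N \<subseteq> (\<lambda>(m, ks). m # ks) ` Sigma {1..<N} (\<lambda>m. LL d m)"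
    proof
      fix ks' assume "ks' \<in> LL (Suc d) N"
      then obtain m ks where ks': "ks' = m # ks" and h: "length ks = d" "sorted_wrt (>) ks"
        "\<forall>x\<in>set ks. x < m" "0 < m" "m < N" "\<forall>k\<in>set ks. 0 < k \<and> k < N"
        by (cases ks') (auto simp: LL_def)
      then have "(m, ks) \<in> Sigma {1..<N} (\<lambda>m. LL d m)" by (auto simp: LL_def)
      then show "ks' \<in> (\<lambda>(m, ks). m # ks) ` Sigma {1..<N} (\<lambda>m. LL d m)"
        using ks' by force
    qed
  qed
qed

lemma CC_sum:
  "ws \<noteq> [] \<or> N > 0 \<Longrightarrow> (\<Sum>m<N. CC ws m) = (\<Sum>ks\<in>LL (length ws) N. WW ws ks)"
proof (induction ws arbitrary: N)
  case Nil
  then have "LL 0 N = {[]}" by (auto simp: LL_def)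
  moreover have "(\<Sum>m<N. CC [] m) = 1"
    using Nil by (simp add: sum.If_cases lessThan_def)
  ultimately show ?case by (simp add: WW_def)
next
  case (Cons w ws)
  define d where "d = length ws"
  have "(\<Sum>m<N. CC (w # ws) m) = (\<Sum>m\<in>{1..<N}. CC (w # ws) m)"
    by (rule sum.mono_neutral_right) (auto simp: not_le)
  also have "\<dots> = (\<Sum>m\<in>{1..<N}. \<Sum>ks\<in>LL d m. WW (w # ws) (m # ks))"
  proof (rule sum.cong)
    fix m assume "m \<in> {1..<N}"
    then have "(\<Sum>m'<m. CC ws m') = (\<Sum>ks\<in>LL d m. WW ws ks)"
      using Cons.IH[of m] by (simp add: d_def)
    then show "CC (w # ws) m = (\<Sum>ks\<in>LL d m. WW (w # ws) (m # ks))"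
      by (simp add: WW_Cons sum_distrib_left)
  qed simp
  also have "\<dots> = (\<Sum>(m, ks)\<in>Sigma {1..<N} (\<lambda>m. LL d m). WW (w # ws) (m # ks))"
    by (rule sum.Sigma) (auto simp: finite_LL)
  also have "\<dots> = (\<Sum>ks'\<in>LL (Suc d) N. WW (w # ws) ks')"
    using sum.reindex_bij_betw[OF LL_Cons_bij[of N d], of "WW (w # ws)"]
    by (simp add: case_prod_unfold)
  finally show ?case by (simp add: d_def)
qed

lemma good_y:
  assumes gd: "good c"
  shows "good (\<lambda>n. \<Sum>m<n. c m)"
    unfolding good_def
  proof (intro allI impI)
    fix r :: real assume r: "0 \<le> r \<and> r < 1"
    have sa: "summable (\<lambda>i. norm (norm (c i) * r ^ i))"
      using gd r by (simp add: good_def abs_mult)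
    have sb: "summable (\<lambda>j. norm ((if j = 0 then 0 else 1) * r ^ j))"
      by (rule summable_comparison_test'[OF summable_geometric[of r]]) (use r in auto)
    have "summable (\<lambda>k. \<Sum>i\<le>k. (norm (c i) * r ^ i) * ((if k - i = 0 then 0 else 1) * r ^ (k - i)))"
      using Cauchy_product_sums[OF sa sb] by (simp add: sums_summable)
    then have s: "summable (\<lambda>k. (\<Sum>i<k. norm (c i)) * r ^ k)"
      by (simp only: conv_e)
    show "summable (\<lambda>n. norm (\<Sum>m<n. c m) * r ^ n)"
    proof (rule summable_comparison_test'[OF s])
      fix n
      have "norm (\<Sum>m<n. c m) * r ^ n \<le> (\<Sum>i<n. norm (c i)) * r ^ n"
        using r by (intro mult_right_mono norm_sum) auto
      then show "norm (norm (\<Sum>m<n. c m) * r ^ n) \<le> (\<Sum>i<n. norm (c i)) * r ^ n"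
        using r by simp
    qed
  qed

lemma good_CC:
  assumes "\<forall>w\<in>set ws. \<exists>K. \<forall>n>0. norm (w n) \<le> K"
  shows "good (CC ws)"
  using assms
proof (induction ws)
  case Nil
  show ?case unfolding good_def
  proof (intro allI impI)
    fix r :: real
    show "summable (\<lambda>n. norm (CC [] n) * r ^ n)"
      by (rule summable_finite[of "{0}"]) auto
  qed
next
  case (Cons w ws)
  then obtain K where K: "\<forall>n>0. norm (w n) \<le> K" by auto
  have gy: "good (\<lambda>n. \<Sum>m<n. CC ws m)" using Cons by (intro good_y) auto
  show ?case
  proof (rule good_mono[OF gy, of _ "max K 0"])
    fix n
    show "norm (CC (w # ws) n) \<le> max K 0 * norm (\<Sum>m<n. CC ws m)"
    proof (cases "n = 0")
      case True then show ?thesis by simp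
    next
      case False
      then have "norm (w n) \<le> K" using K by simp
      then have "norm (w n) \<le> max K 0" by (simp add: le_max_iff_disj)
      then have "norm (w n) * norm (\<Sum>m<n. CC ws m) \<le> max K 0 * norm (\<Sum>m<n. CC ws m)"
        by (rule mult_right_mono) simp
      then show ?thesis by (simp add: norm_mult)
    qed
  qed
qed

lemma summable_CC_top:
  assumes r: "0 \<le> r" "r < 1" and K: "\<forall>n>0. norm (w n) \<le> K * r ^ n" and gd: "good (CC ws)"
  shows "summable (\<lambda>n. norm (CC (w # ws) n))"
proof -
  have gy: "good (\<lambda>n. \<Sum>m<n. CC ws m)" by (rule good_y[OF gd])
  then have "summable (\<lambda>n. norm (\<Sum>m<n. CC ws m) * r ^ n)" using r by (simp add: good_def)
  then have s: "summable (\<lambda>n. max K 0 * (norm (\<Sum>m<n. CC ws m) * r ^ n))" by (rule summable_mult)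
  show ?thesis
  proof (rule summable_comparison_test'[OF s])
    fix n
    show "norm (norm (CC (w # ws) n)) \<le> max K 0 * (norm (\<Sum>m<n. CC ws m) * r ^ n)"
    proof (cases "n = 0")
      case True then show ?thesis by simp
    next
      case False
      then have "norm (w n) \<le> K * r ^ n" using K by simp
      also have "\<dots> \<le> max K 0 * r ^ n" using r by (intro mult_right_mono) auto
      finally have "norm (w n) \<le> max K 0 * r ^ n" .
      then have "norm (w n) * norm (\<Sum>m<n. CC ws m) \<le> max K 0 * r ^ n * norm (\<Sum>m<n. CC ws m)"
        by (rule mult_right_mono) simp
      then show ?thesis by (simp add: norm_mult mult_ac)
    qed
  qed
qed

definition AA :: "nat \<Rightarrow> nat list set" where
  "AA d = {ks. length ks = d \<and> sorted_wrt (>) ks \<and> (\<forall>k\<in>set ks. k > 0)}"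

lemma LL_sub_AA: "LL d N \<subseteq> AA d"
  by (auto simp: LL_def AA_def)

lemma LL_mono: "N \<le> M \<Longrightarrow> LL d N \<subseteq> LL d M"
  by (auto simp: LL_def)

lemma fin_sub_LL:
  assumes "finite F" "F \<subseteq> AA d"
  shows "\<exists>N0. \<forall>N\<ge>N0. F \<subseteq> LL d N"
proof -
  define M where "M = Max (insert 0 (\<Union>ks\<in>F. set ks))"
  have fin: "finite (insert 0 (\<Union>ks\<in>F. set ks))" using assms(1) by auto
  have "F \<subseteq> LL d N" if "N \<ge> Suc M" for N
  proof
    fix ks assume ks: "ks \<in> F"
    have "k \<le> M" if "k \<in> set ks" for k
      unfolding M_def by (rule Max_ge[OF fin]) (use ks that in auto)
    then have kN: "\<forall>k\<in>set ks. k < N" using \<open>N \<ge> Suc M\<close> by (meson Suc_le_lessD le_less_trans not_less)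
    have "ks \<in> AA d" using ks assms(2) by auto
    then show "ks \<in> LL d N" using kN by (simp add: LL_def AA_def)
  qed
  then show ?thesis by (intro exI[of _ "Suc M"]) simp
qed

lemma filterlim_LL: "filterlim (\<lambda>N. LL d N) (finite_subsets_at_top (AA d)) sequentially"
  unfolding filterlim_def le_filter_def eventually_filtermap
proof (intro allI impI)
  fix P assume "eventually P (finite_subsets_at_top (AA d))"
  then obtain X where X: "finite X" "X \<subseteq> AA d" "\<forall>Y. finite Y \<and> X \<subseteq> Y \<and> Y \<subseteq> AA d \<longrightarrow> P Y"
    by (auto simp: eventually_finite_subsets_at_top)
  obtain N0 where N0: "\<forall>N\<ge>N0. X \<subseteq> LL d N" using fin_sub_LL[OF X(1,2)] by blast
  show "eventually (\<lambda>N. P (LL d N)) sequentially"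
    unfolding eventually_sequentially
  proof (rule exI[of _ N0], intro allI impI)
    fix N assume "N0 \<le> N"
    then have "X \<subseteq> LL d N" using N0 by simp
    then show "P (LL d N)" using X(3) finite_LL[of d N] LL_sub_AA[of d N] by simp
  qed
qed

lemma WW_norm:
  "WW (map (\<lambda>w n. complex_of_real (norm (w n))) ws) ks = complex_of_real (norm (WW ws ks))"
  by (simp add: WW_def prod_norm[symmetric] of_real_prod)

lemma CC_infsum:
  assumes ne: "ws \<noteq> []" and s1: "summable (\<lambda>n. norm (CC ws n))"
    and s2: "summable (\<lambda>n. norm (CC (map (\<lambda>w n. complex_of_real (norm (w n))) ws) n))"
  shows "infsum (WW ws) (AA (length ws)) = (\<Sum>n. CC ws n)"
proof -
  define d where "d = length ws"
  define ws' where "ws' = map (\<lambda>w n. complex_of_real (norm (w n))) ws"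
  define M where "M = (\<Sum>n. norm (CC ws' n))"
  have ne': "ws' \<noteq> []" using ne by (simp add: ws'_def)
  have bnd: "(\<Sum>ks\<in>LL d N. norm (WW ws ks)) \<le> M" for N
  proof -
    have "(\<Sum>ks\<in>LL d N. norm (WW ws ks)) = Re (\<Sum>ks\<in>LL d N. WW ws' ks)"
      by (simp add: ws'_def WW_norm)
    also have "\<dots> = Re (\<Sum>m<N. CC ws' m)"
      using CC_sum[of ws' N] ne' by (simp add: ws'_def d_def)
    also have "\<dots> \<le> norm (\<Sum>m<N. CC ws' m)" by (rule complex_Re_le_cmod)
    also have "\<dots> \<le> (\<Sum>m<N. norm (CC ws' m))" by (rule norm_sum)
    also have "\<dots> \<le> M" unfolding M_def
      by (rule sum_le_suminf) (use s2 in \<open>auto simp: ws'_def\<close>)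
    finally show ?thesis .
  qed
  have abs: "(\<lambda>ks. norm (WW ws ks)) summable_on AA d"
  proof (rule nonneg_bdd_above_summable_on)
    show "bdd_above (sum (\<lambda>ks. norm (WW ws ks)) ` {F. F \<subseteq> AA d \<and> finite F})"
    proof (rule bdd_aboveI)
      fix x assume "x \<in> sum (\<lambda>ks. norm (WW ws ks)) ` {F. F \<subseteq> AA d \<and> finite F}"
      then obtain F where F: "F \<subseteq> AA d" "finite F" and x: "x = (\<Sum>ks\<in>F. norm (WW ws ks))" by auto
      obtain N0 where "\<forall>N\<ge>N0. F \<subseteq> LL d N" using fin_sub_LL[OF F(2,1)] by blast
      then have "F \<subseteq> LL d N0" by simp
      then have "x \<le> (\<Sum>ks\<in>LL d N0. norm (WW ws ks))"
        unfolding x by (intro sum_mono2 finite_LL) auto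
      then show "x \<le> M" using bnd[of N0] by simp
    qed
  qed simp
  have sm: "WW ws summable_on AA d"
    using abs by (rule Infinite_Sum.abs_summable_summable)
  have T: "(sum (WW ws) \<longlongrightarrow> infsum (WW ws) (AA d)) (finite_subsets_at_top (AA d))"
    using has_sum_infsum[OF sm] by (simp add: has_sum_def)
  have L1: "(\<lambda>N. sum (WW ws) (LL d N)) \<longlonglongrightarrow> infsum (WW ws) (AA d)"
    by (rule filterlim_compose[OF T filterlim_LL])
  have L2: "(\<lambda>N. \<Sum>m<N. CC ws m) \<longlonglongrightarrow> (\<Sum>n. CC ws n)"
    by (rule summable_LIMSEQ) (rule summable_norm_cancel[OF s1])
  have "(\<lambda>N. \<Sum>m<N. CC ws m) = (\<lambda>N. sum (WW ws) (LL d N))"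
    using CC_sum ne by (simp add: d_def fun_eq_iff)
  then show ?thesis using LIMSEQ_unique[OF L1] L2 by (simp add: d_def)
qed


lemma cF_CC: "cF q r n = CC (map (\<lambda>(s, a) n. q ^ (n * a) / (1 - q ^ n) ^ s) r) n"
proof (induction r arbitrary: n)
  case Nil then show ?case by simp
next
  case (Cons p r) then show ?case by (cases p) simp
qed

lemma wbound:
  fixes q :: complex
  assumes q: "norm q < 1" and n: "n > 0"
  shows "norm (q ^ (n * a) / (1 - q ^ n) ^ s) \<le> norm q ^ (n * a) / (1 - norm q) ^ s"
proof -
  have d: "1 - norm q \<le> norm (1 - q ^ n)" by (rule norm_one_minus_pow[OF q n])
  have "norm (q ^ (n * a) / (1 - q ^ n) ^ s) = norm q ^ (n * a) / norm (1 - q ^ n) ^ s"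
    by (simp add: norm_divide norm_power)
  also have "\<dots> \<le> norm q ^ (n * a) / (1 - norm q) ^ s"
    using d q by (intro divide_left_mono power_mono mult_pos_pos zero_less_power) auto
  finally show ?thesis .
qed

theorem theorem6p2:
  fixes q :: complex and s a :: "nat list"
  assumes "norm q < 1"
    and "length a = length s"
    and "\<forall>x\<in>set s. x > 0"
    and "\<forall>j\<in>{1..length s}. sum_list (take j a) > 0"
  shows "zetaq q a s = (1 - q) ^ sum_list s * Fop q (zip s a) 1
         \<and> zfrak q a s = Fop q (zip s a) 1"
proof -
  have q: "norm q < 1" by (rule assms(1))
  have main: "zfrak q a s = Fop q (zip s a) 1"
  proof (cases s)
    case Nil
    then have a: "a = []" using assms(2) by simp
    have "{ks :: nat list. length ks = 0 \<and> sorted_wrt (>) ks \<and> (\<forall>k\<in>set ks. k > 0)} = {[]}" by auto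
    then show ?thesis using Nil a by (simp add: zfrak_def)
  next
    case (Cons s0 s')
    then obtain a0 a' where a: "a = a0 # a'" using assms(2) by (cases a) auto
    have a0: "a0 > 0" using assms(4) Cons a by (auto dest: bspec[of _ _ 1])
    define wt where "wt = (\<lambda>(s::nat, a::nat) (n::nat). q ^ (n * a) / (1 - q ^ n) ^ s)"
    define r where "r = zip s a"
    define ws where "ws = map wt r"
    have r: "r = (s0, a0) # zip s' a'" by (simp add: r_def Cons a)
    have lr: "length r = length s" using assms(2) by (simp add: r_def)
    have ne: "ws \<noteq> []" by (simp add: ws_def r)
    have cc: "cF q r n = CC ws n" for n by (simp add: cF_CC ws_def wt_def)
    have ccf: "cF q r = CC ws" by (rule ext) (rule cc)
    have F1: "CC ws sums Fop q r 1"
      using Fop_at1(1)[OF q a0, of s0 "zip s' a'"] unfolding r[symmetric] ccf .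
    have F2: "summable (\<lambda>n. norm (CC ws n))"
      using Fop_at1(2)[OF q a0, of s0 "zip s' a'"] unfolding r[symmetric] ccf .
    define nw where "nw = (\<lambda>(w::nat \<Rightarrow> complex) (n::nat). complex_of_real (norm (w n)))"
    have nq: "0 \<le> norm q" "norm q < 1" using q by auto
    have gd: "good (CC (map nw (map wt (zip s' a'))))"
    proof (rule good_CC, intro ballI)
      fix w assume "w \<in> set (map nw (map wt (zip s' a')))"
      then obtain sj aj where w: "w = nw (wt (sj, aj))" by auto
      have "norm (w n) \<le> 1 / (1 - norm q) ^ sj" if "n > 0" for n
      proof -
        have "norm (w n) = norm (q ^ (n * aj) / (1 - q ^ n) ^ sj)" by (simp add: w nw_def wt_def)
        also have "\<dots> \<le> norm q ^ (n * aj) / (1 - norm q) ^ sj" by (rule wbound[OF q that])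
        also have "\<dots> \<le> 1 / (1 - norm q) ^ sj"
          using nq by (intro divide_right_mono power_le_one) auto
        finally show ?thesis .
      qed
      then show "\<exists>K. \<forall>n>0. norm (w n) \<le> K" by blast
    qed
    have top: "\<forall>n>0. norm (nw (wt (s0, a0)) n) \<le> (1 / (1 - norm q) ^ s0) * norm q ^ n"
    proof (intro allI impI)
      fix n :: nat assume n: "n > 0"
      have "norm (nw (wt (s0, a0)) n) = norm (q ^ (n * a0) / (1 - q ^ n) ^ s0)" by (simp add: nw_def wt_def)
      also have "\<dots> \<le> norm q ^ (n * a0) / (1 - norm q) ^ s0" by (rule wbound[OF q n])
      also have "norm q ^ (n * a0) \<le> norm q ^ n"
        using nq a0 by (intro power_decreasing) auto
      then have "norm q ^ (n * a0) / (1 - norm q) ^ s0 \<le> norm q ^ n / (1 - norm q) ^ s0"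
        using nq by (intro divide_right_mono) auto
      finally show "norm (nw (wt (s0, a0)) n) \<le> (1 / (1 - norm q) ^ s0) * norm q ^ n" by simp
    qed
    have S2: "summable (\<lambda>n. norm (CC (map nw ws) n))"
      using summable_CC_top[OF nq top gd] by (simp add: ws_def r)
    have "infsum (WW ws) (AA (length ws)) = (\<Sum>n. CC ws n)"
      by (rule CC_infsum[OF ne F2]) (use S2 in \<open>simp add: nw_def\<close>)
    also have "\<dots> = Fop q r 1" by (rule sums_unique[OF F1, symmetric])
    finally have I: "infsum (WW ws) (AA (length ws)) = Fop q r 1" .
    have "zfrak q a s = infsum (WW ws) (AA (length ws))"
      unfolding zfrak_def WW_def AA_def
      by (simp add: ws_def lr r_def assms(2) wt_def)
    then show ?thesis using I by (simp add: r_def)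
  qed
  then show ?thesis by (simp add: zetaq_def)
qed

end
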